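(* For all positive integers $m,n,m',n',a$ with $m+n=m'+n'$: (i) $\mathcal{F}(a,m,n)<\mathcal{F}(a,m',n')$ if and only if either $mn<m'n'$, or ($mn=m'n'$ and $m<n$); (ii) $\mathcal{F}(m,a,n)<\mathcal{F}(m',a,n')$ if and only if $mn<m'n'$.
   Context: $\mathcal{F}$ is defined on finite tuples of positive integers recursively: $\mathcal{F}(a)=1$ for every positive integer $a$; for $s\ge2$, $\mathcal{F}(a_1,\dots,a_s)=\sum_{i=1}^s\mathcal{F}(a_1,\dots,a_{i-1},a_i-1,a_{i+1},\dots,a_s)$, where a tuple with a zero entry is reduced by: $\mathcal{F}(0,a_2,\dots,a_t)=\mathcal{F}(a_2,\dots,a_t)$, $\mathcal{F}(a_1,\dots,a_t,0)=\mathcal{F}(a_1,\dots,a_t)$, and $\mathcal{F}(a_1,\dots,a_r,0,a_{r+2},\dots,a_s)=\mathcal{F}(a_1,\dots,a_{r-1},a_r+a_{r+2},a_{r+3},\dots,a_s)$. *)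

theory Defs
  imports Main
begin

definition dec_entry :: "nat list \<Rightarrow> nat \<Rightarrow> nat list" where
  "dec_entry xs i =
     (let b = xs ! i - 1 in
      if 0 < b then xs[i := b]
      else if i = 0 then tl xs
      else if i = length xs - 1 then butlast xs
      else take (i - 1) xs @ [xs ! (i - 1) + xs ! (i + 1)] @ drop (i + 2) xs)"

lemma sum_list_split3:
  assumes "0 < i" "i + 1 < length xs"
  shows "sum_list xs = sum_list (take (i - 1) xs) + xs ! (i - 1) + xs ! i + xs ! (i + 1) + sum_list (drop (i + 2) xs)"
proof -
  have "xs = take (i - 1) xs @ [xs ! (i - 1), xs ! i, xs ! (i+1)] @ drop (i + 2) xs"
    using assms
    by (metis (no_types) Cons_nth_drop_Suc Suc_1 Suc_diff_1 Suc_lessD add.commute add_Suc_right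
        append_Cons append_self_conv2 append_take_drop_id less_trans_Suc plus_1_eq_Suc)
  then have "sum_list xs = sum_list (take (i - 1) xs @ [xs ! (i - 1), xs ! i, xs ! (i+1)] @ drop (i + 2) xs)" by metis
  then show ?thesis by (simp add: algebra_simps)
qed

lemma dec_entry_decreases:
  assumes "i < length xs"
  shows "sum_list (dec_entry xs i) + length (dec_entry xs i) < sum_list xs + length xs"
proof (cases "0 < xs ! i - 1")
  case True
  then show ?thesis using assms
    using elem_le_sum_list[OF assms] by (simp add: dec_entry_def Let_def sum_list_update)
next
  case False
  show ?thesis
  proof (cases "i = 0")
    case True
    then show ?thesis using assms False
      by (cases xs) (auto simp: dec_entry_def Let_def)
  next
    case i0: False
    show ?thesis
    proof (cases "i = length xs - 1")
      case True
      have "xs = butlast xs @ [last xs]" using assms by (metis append_butlast_last_id less_zeroE list.size(3))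
      then have "sum_list xs = sum_list (butlast xs) + last xs"
        by (metis sum_list_append sum_list_simps add_0_right)
      then show ?thesis using assms False True i0
        by (auto simp: dec_entry_def Let_def)
    next
      case False2: False
      have i1: "i + 1 < length xs" using assms False2 by auto
      then show ?thesis using sum_list_split3[OF _ i1] i0 False False2 assms
        by (auto simp: dec_entry_def Let_def)
    qed
  qed
qed

function F :: "nat list \<Rightarrow> nat" where
  "F [] = 0"
| "F [a] = 1"
| "F (a # b # rest) =
     sum_list (map (\<lambda>i. F (dec_entry (a # b # rest) i)) [0..<length (a # b # rest)])"
  by pat_completeness auto
termination
proof (relation "measure (\<lambda>xs. sum_list xs + length xs)")
  show "wf (measure (\<lambda>xs. sum_list xs + length xs))" by simp
next
  fix a b :: nat and rest :: "nat list" and i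
  assume "i \<in> set [0..<length (a # b # rest)]"
  then have "i < length (a # b # rest)" by auto
  from dec_entry_decreases[OF this]
  show "(dec_entry (a # b # rest) i, a # b # rest) \<in> measure (\<lambda>xs. sum_list xs + length xs)"
    by (simp only: in_measure)
qed

end

theory Submission
  imports Defs
begin

declare F.simps(3)[simp del]

lemma F3e: "F [x, y, z] = F (dec_entry [x,y,z] 0) + F (dec_entry [x,y,z] 1) + F (dec_entry [x,y,z] 2)"
proof -
  have "[0..<length [x,y,z]] = [0,1,2]" by (simp add: upt_rec)
  then show ?thesis by (simp only: F.simps) simp
qed

lemma F2e: "F [x, y] = F (dec_entry [x,y] 0) + F (dec_entry [x,y] 1)"
proof -
  have "[0..<length [x,y]] = [0,1]" by (simp add: upt_rec)
  then show ?thesis by (simp only: F.simps) simp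
qed

lemma F2: "0 < p \<Longrightarrow> 0 < q \<Longrightarrow> F [p, q] = (p + q) choose p"
proof (induction "p + q" arbitrary: p q rule: less_induct)
  case less
  note e = F2e[of p q]
  have d0: "F (dec_entry [p,q] 0) = (p - 1 + q) choose (p - 1)"
  proof (cases "p = 1")
    case True then show ?thesis by (simp add: dec_entry_def)
  next
    case False
    then have "dec_entry [p,q] 0 = [p-1,q]" using less by (simp add: dec_entry_def)
    then show ?thesis using less False by simp
  qed
  have d1: "F (dec_entry [p,q] 1) = (p + (q - 1)) choose p"
  proof (cases "q = 1")
    case True then show ?thesis by (simp add: dec_entry_def)
  next
    case False
    then have "dec_entry [p,q] 1 = [p,q-1]" using less by (simp add: dec_entry_def)
    then show ?thesis using less False by simp
  qed
  have "(p + q) choose p = ((p - 1 + q) choose (p - 1)) + ((p + (q - 1)) choose p)"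
  proof -
    obtain p' q' where "p = Suc p'" "q = Suc q'" using less by (metis gr0_implies_Suc)
    then show ?thesis by simp
  qed
  then show ?case using e d0 d1 by simp
qed

definition tt :: "nat \<Rightarrow> nat \<Rightarrow> nat \<Rightarrow> nat" where
  "tt x y z = ((x + y - 1) choose x) * ((x + y + z) choose z)"

definition G :: "nat \<Rightarrow> nat \<Rightarrow> nat \<Rightarrow> nat" where
  "G x y z = (\<Sum>i\<le>x. tt i y z)"

lemma G0: "G 0 y z = (y + z) choose z"
  by (simp add: G_def tt_def)

lemma G_z0: "0 < y \<Longrightarrow> G x y 0 = (x + y) choose x"
proof -
  assume "0 < y"
  have "G x y 0 = (\<Sum>i\<le>x. ((y - 1) + i) choose i)"
    unfolding G_def tt_def using \<open>0 < y\<close> by (intro sum.cong) (auto simp: add.commute)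
  also have "\<dots> = Suc (y - 1 + x) choose x" by (rule sum_choose_lower)
  finally show ?thesis using \<open>0 < y\<close> by (simp add: add.commute)
qed

lemma G_y0: "G x 0 z = 1"
proof -
  have "G x 0 z = (\<Sum>i\<in>{0}. tt i 0 z)"
    unfolding G_def by (rule sum.mono_neutral_right) (auto simp: tt_def)
  then show ?thesis by (simp add: tt_def)
qed

lemma last_id: "0 < y \<Longrightarrow> 0 < z \<Longrightarrow> tt x y z = G x y (z - 1) + G x (y - 1) z"
proof (induction x)
  case 0
  obtain z' where z: "z = Suc z'" using 0 by (metis gr0_implies_Suc)
  show ?case using 0 by (simp add: G_def tt_def z)
next
  case (Suc x)
  obtain z' where z: "z = Suc z'" using Suc by (metis gr0_implies_Suc)
  obtain y' where y: "y = Suc y'" using Suc by (metis gr0_implies_Suc)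
  have IH: "tt x y z = G x y z' + G x y' z" using Suc by (simp add: z y)
  have "G (Suc x) y z' + G (Suc x) y' z = tt x y z + tt (Suc x) y z' + tt (Suc x) y' z"
    using IH by (simp add: G_def y)
  also have "\<dots> = tt (Suc x) y z"
  proof -
    let ?N = "x + y + z"
    have a1: "x + y + z' = Suc x + y' + z'" "Suc x + y + z = Suc ?N" "Suc x + y + z' = ?N"
      "Suc x + y' + z = ?N" "x + y - 1 = x + y'" "Suc x + y - 1 = Suc (x + y')" "Suc x + y' - 1 = x + y'"
      using y z by auto
    have p1: "Suc ?N choose z = (?N choose z') + (?N choose z)" using z by simp
    have p2: "Suc (x + y') choose Suc x = ((x + y') choose x) + ((x + y') choose Suc x)" by simp
    have "tt (Suc x) y z = (Suc (x + y') choose Suc x) * (?N choose z') + (Suc (x + y') choose Suc x) * (?N choose z)"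
      unfolding tt_def a1 p1 by (simp add: algebra_simps)
    also have "\<dots> = tt (Suc x) y z' + ((x + y') choose x) * (?N choose z) + ((x + y') choose Suc x) * (?N choose z)"
      unfolding tt_def a1 p2 by (simp add: algebra_simps)
    also have "\<dots> = tt (Suc x) y z' + tt x y z + tt (Suc x) y' z"
      unfolding tt_def a1 by simp
    finally show ?thesis by simp
  qed
  finally show ?case by (simp add: z y)
qed

lemma G_rec: "0 < x \<Longrightarrow> 0 < y \<Longrightarrow> 0 < z \<Longrightarrow> G x y z = G (x - 1) y z + G x (y - 1) z + G x y (z - 1)"
proof -
  assume h: "0 < x" "0 < y" "0 < z"
  obtain x' where x: "x = Suc x'" using h by (metis gr0_implies_Suc)
  have "G x y z = G x' y z + tt x y z" by (simp add: G_def x)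
  then show ?thesis using last_id[OF h(2,3), of x] x by simp
qed

lemma FG: "0 < x \<Longrightarrow> 0 < y \<Longrightarrow> 0 < z \<Longrightarrow> F [x, y, z] = G x y z"
proof (induction "x + y + z" arbitrary: x y z rule: less_induct)
  case less
  note e = F3e[of x y z]
  have d0: "F (dec_entry [x,y,z] 0) = G (x - 1) y z"
  proof (cases "x = 1")
    case True
    have "(y + z) choose y = (y + z) choose z" using binomial_symmetric[of y "y+z"] by simp
    then show ?thesis using True less F2[of y z] by (simp add: dec_entry_def G0)
  next
    case False
    then have "dec_entry [x,y,z] 0 = [x-1,y,z]" using less by (simp add: dec_entry_def)
    then show ?thesis using less False by simp
  qed
  have d1: "F (dec_entry [x,y,z] 1) = G x (y - 1) z"
  proof (cases "y = 1")
    case True then show ?thesis by (simp add: dec_entry_def G_y0)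
  next
    case False
    then have "dec_entry [x,y,z] 1 = [x,y-1,z]" using less by (simp add: dec_entry_def)
    then show ?thesis using less False by simp
  qed
  have d2: "F (dec_entry [x,y,z] 2) = G x y (z - 1)"
  proof (cases "z = 1")
    case True then show ?thesis using less F2[of x y] by (simp add: dec_entry_def G_z0)
  next
    case False
    then have "dec_entry [x,y,z] 2 = [x,y,z-1]" using less by (simp add: dec_entry_def)
    then show ?thesis using less False by simp
  qed
  show ?case using e d0 d1 d2 G_rec[OF less.prems] by linarith
qed


lemma factm: "0 < m \<Longrightarrow> fact m = m * (fact (m - 1) :: nat)"
  by (cases m) auto

lemma KEY: "0 < y \<Longrightarrow> tt x y z * (fact x * fact (y - 1) * fact z * (x + y)) = (fact (x + y + z) :: nat)"
proof -
  assume y: "0 < y"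
  have a: "fact x * fact (y - 1) * ((x + y - 1) choose x) = (fact (x + y - 1) :: nat)"
    using binomial_fact_lemma[of x "x + y - 1"] y by simp
  have b: "fact z * fact (x + y) * ((x + y + z) choose z) = (fact (x + y + z) :: nat)"
    using binomial_fact_lemma[of z "x + y + z"] by (simp add: add.commute)
  have c: "fact (x + y) = (x + y) * (fact (x + y - 1) :: nat)"
    using y factm[of "x+y"] by simp
  have "tt x y z * (fact x * fact (y - 1) * fact z * (x + y))
        = (fact x * fact (y - 1) * ((x + y - 1) choose x)) * (x + y) * fact z * ((x + y + z) choose z)"
    unfolding tt_def by (simp add: algebra_simps)
  also have "\<dots> = fact z * fact (x + y) * ((x + y + z) choose z)" unfolding a c by (simp add: algebra_simps)
  finally show ?thesis using b by simp
qed

lemma MULT: "((i + b) choose i) * ((i + b + j) choose j) * (fact i * fact b * fact j) = (fact (i + b + j) :: nat)"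
proof -
  have a: "fact i * fact b * ((i + b) choose i) = (fact (i + b) :: nat)"
    using binomial_fact_lemma[of i "i + b"] by simp
  have b: "fact j * fact (i + b) * ((i + b + j) choose j) = (fact (i + b + j) :: nat)"
    using binomial_fact_lemma[of j "i + b + j"] by (simp add: add.commute)
  have "((i + b) choose i) * ((i + b + j) choose j) * (fact i * fact b * fact j)
     = fact j * (fact i * fact b * ((i + b) choose i)) * ((i + b + j) choose j)" by (simp add: algebra_simps)
  also have "\<dots> = fact j * fact (i + b) * ((i + b + j) choose j)" by (simp only: a)
  finally show ?thesis using b by simp
qed

lemma MULT_sym: "((i + b) choose i) * ((i + b + j) choose j) = ((j + b) choose j) * ((j + b + i) choose i)"
proof -
  have "((i + b) choose i) * ((i + b + j) choose j) * (fact i * fact b * fact j)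
      = ((j + b) choose j) * ((j + b + i) choose i) * (fact i * fact b * fact j)"
    using MULT[of i b j] MULT[of j b i] by (simp add: algebra_simps)
  then show ?thesis by simp
qed

lemma cmp_lt: "(A::nat) * D1 = B * D2 \<Longrightarrow> D2 < D1 \<Longrightarrow> 0 < B \<Longrightarrow> A < B"
proof (rule ccontr)
  assume h: "A * D1 = B * D2" "D2 < D1" "0 < B" "\<not> A < B"
  have "B * D2 < B * D1" using h by simp
  also have "\<dots> \<le> A * D1" using h(4) by (intro mult_le_mono1) (simp add: not_less)
  finally have "B * D2 < A * D1" .
  then show False using h(1) by simp
qed

lemma tt_pos: "0 < y \<Longrightarrow> 0 < tt x y z"
  using KEY[of y x z] by (metis fact_gt_zero mult_eq_0_iff neq0_conv)

lemma T0: "tt 0 m n = tt 0 n m"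
  unfolding tt_def using binomial_symmetric[of n "n+m"] by (simp add: add.commute)

lemma T1: "0 < m \<Longrightarrow> m < n \<Longrightarrow> 0 < i \<Longrightarrow> tt i m n < tt i n m"
proof -
  assume h: "0 < m" "m < n" "0 < i"
  let ?c = "fact i * fact (m - 1) * fact (n - 1) :: nat"
  have fm: "fact m = m * (fact (m - 1) :: nat)" using h factm[of m] by simp
  have fn: "fact n = n * (fact (n - 1) :: nat)" using h factm[of n] by simp
  have e1: "tt i m n * (?c * (n * (i + m))) = fact (i + m + n)"
    using KEY[of m i n] h fn by (simp add: algebra_simps)
  have e2: "tt i n m * (?c * (m * (i + n))) = fact (i + m + n)"
    using KEY[of n i m] h fm by (simp add: algebra_simps)
  have "m * i < n * i" using h by simp
  then have "m * (i + n) < n * (i + m)" by (simp add: algebra_simps)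
  then have "?c * (m * (i + n)) < ?c * (n * (i + m))" by (intro mult_strict_left_mono) simp_all
  from cmp_lt[OF e1[folded e2] this tt_pos[of n i m]] h show ?thesis by simp
qed

lemma T2: "0 < m \<Longrightarrow> m + 1 < n \<Longrightarrow> tt i n m < tt i (m + 1) (n - 1)"
proof -
  assume h: "0 < m" "m + 1 < n"
  let ?c = "fact i * fact m * fact (n - 1) :: nat"
  have e1: "tt i n m * (?c * (i + n)) = fact (i + n + m)"
    using KEY[of n i m] h by (simp add: algebra_simps)
  have e2: "tt i (m + 1) (n - 1) * (?c * (i + m + 1)) = fact (i + n + m)"
    using KEY[of "m+1" i "n - 1"] h by (simp add: algebra_simps)
  have "?c * (i + m + 1) < ?c * (i + n)" using h by (intro mult_strict_left_mono) simp_all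
  from cmp_lt[OF e1[folded e2] this tt_pos[of "m+1" i "n - 1"]] show ?thesis by simp
qed

lemma T3: "0 < a \<Longrightarrow> m + 1 < n \<Longrightarrow> tt n a m < tt (m + 1) a (n - 1)"
proof -
  assume h: "0 < a" "m + 1 < n"
  let ?c = "fact m * fact (n - 1) * fact (a - 1) :: nat"
  have fn: "fact n = n * (fact (n - 1) :: nat)" using h factm[of n] by simp
  have e1: "tt n a m * (?c * (n * (n + a))) = fact (n + a + m)"
    using KEY[of a n m] h fn by (simp add: algebra_simps)
  have e2: "tt (m + 1) a (n - 1) * (?c * ((m + 1) * (m + 1 + a))) = fact (n + a + m)"
    using KEY[of a "m+1" "n - 1"] h by (simp add: algebra_simps)
  have "(m + 1) * (m + 1 + a) < n * (n + a)" using h by (intro mult_strict_mono) auto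
  then have "?c * ((m + 1) * (m + 1 + a)) < ?c * (n * (n + a))" by (intro mult_strict_left_mono) simp_all
  from cmp_lt[OF e1[folded e2] this tt_pos[of a "m+1" "n - 1"]] h show ?thesis by simp
qed


lemma DSinner: "0 < y \<Longrightarrow> (\<Sum>j\<le>z. ((i + (y - 1)) choose i) * ((i + (y - 1) + j) choose j)) = tt i y z"
proof -
  assume y: "0 < y"
  have "(\<Sum>j\<le>z. ((i + (y - 1)) choose i) * ((i + (y - 1) + j) choose j))
      = ((i + (y - 1)) choose i) * (\<Sum>j\<le>z. ((i + (y - 1) + j) choose j))"
    by (simp add: sum_distrib_left)
  also have "\<dots> = ((i + (y - 1)) choose i) * (Suc (i + (y - 1) + z) choose z)"
    by (simp only: sum_choose_lower)
  also have "\<dots> = tt i y z" unfolding tt_def using y by simp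
  finally show ?thesis .
qed

lemma G_sym: "0 < a \<Longrightarrow> G m a n = G n a m"
proof -
  assume a: "0 < a"
  have "G m a n = (\<Sum>i\<le>m. \<Sum>j\<le>n. ((i + (a - 1)) choose i) * ((i + (a - 1) + j) choose j))"
    unfolding G_def using DSinner[OF a] by simp
  also have "\<dots> = (\<Sum>j\<le>n. \<Sum>i\<le>m. ((i + (a - 1)) choose i) * ((i + (a - 1) + j) choose j))"
    by (rule sum.swap)
  also have "\<dots> = (\<Sum>j\<le>n. \<Sum>i\<le>m. ((j + (a - 1)) choose j) * ((j + (a - 1) + i) choose i))"
    by (simp only: MULT_sym)
  also have "\<dots> = G n a m"
    unfolding G_def using DSinner[OF a] by simp
  finally show ?thesis .
qed

lemma STEP2: "0 < a \<Longrightarrow> 0 < n \<Longrightarrow> G (m + 1) a (n - 1) + tt n a m = G m a n + tt (m + 1) a (n - 1)"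
proof -
  assume a: "0 < a" and n: "0 < n"
  obtain n' where n': "n = Suc n'" using n by (metis gr0_implies_Suc)
  have pas: "tt i a n = tt i a n' + ((i + (a - 1)) choose i) * ((i + (a - 1) + n) choose n)" for i
  proof -
    have "(i + a + n) choose n = ((i + a + n') choose n') + ((i + (a - 1) + n) choose n)"
      using a n' by (simp add: add.commute)
    then show ?thesis unfolding tt_def using a by (simp add: algebra_simps)
  qed
  have "G m a n = G m a n' + (\<Sum>i\<le>m. ((i + (a - 1)) choose i) * ((i + (a - 1) + n) choose n))"
    unfolding G_def pas by (simp add: sum.distrib)
  also have "(\<Sum>i\<le>m. ((i + (a - 1)) choose i) * ((i + (a - 1) + n) choose n))
     = (\<Sum>i\<le>m. ((n + (a - 1)) choose n) * ((n + (a - 1) + i) choose i))"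
    by (simp only: MULT_sym)
  also have "\<dots> = tt n a m" using DSinner[OF a] .
  finally have 1: "G m a n = G m a n' + tt n a m" .
  have 2: "G (m + 1) a n' = G m a n' + tt (m + 1) a n'" by (simp add: G_def)
  show ?thesis using 1 2 n' by simp
qed

lemma L3: "0 < a \<Longrightarrow> m + 1 < n \<Longrightarrow> G m a n < G (m + 1) a (n - 1)"
  using STEP2[of a n m] T3[of a m n] by simp

lemma L1: "0 < a \<Longrightarrow> 0 < m \<Longrightarrow> m < n \<Longrightarrow> G a m n < G a n m"
  unfolding G_def
proof (rule sum_strict_mono_ex1)
  assume "0 < a" "0 < m" "m < n"
  show "\<forall>x\<in>{..a}. tt x m n \<le> tt x n m"
    using T0 T1 \<open>0 < m\<close> \<open>m < n\<close> by (metis le_refl less_imp_le_nat neq0_conv)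
  show "\<exists>x\<in>{..a}. tt x m n < tt x n m"
    using T1[of m n 1] \<open>0 < a\<close> \<open>0 < m\<close> \<open>m < n\<close> by (intro bexI[of _ 1]) auto
qed simp

lemma L2: "0 < m \<Longrightarrow> m + 1 < n \<Longrightarrow> G a n m < G a (m + 1) (n - 1)"
  unfolding G_def by (rule sum_strict_mono) (use T2[of m n] in auto)


lemma prod_mono: "(k::nat) < k' \<Longrightarrow> 2 * k' \<le> s \<Longrightarrow> k * (s - k) < k' * (s - k')"
proof -
  assume h: "k < k'" "2 * k' \<le> s"
  obtain d where d: "k' = k + d" "0 < d" using h by (metis less_imp_add_positive)
  define r where "r = s - k'"
  have r: "s = k' + r" "k' \<le> r" using h unfolding r_def by auto
  have "k * d < r * d" using d r by simp
  then show ?thesis using d r by (simp add: algebra_simps)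
qed

lemma MONO2: "0 < a \<Longrightarrow> k < k' \<Longrightarrow> 2 * k' \<le> s \<Longrightarrow> G k a (s - k) < G k' a (s - k')"
proof (induction k')
  case 0 then show ?case by simp
next
  case (Suc j)
  have st: "G j a (s - j) < G (j + 1) a (s - j - 1)" using L3[of a j "s - j"] Suc.prems by simp
  show ?case
  proof (cases "k = j")
    case True then show ?thesis using st by simp
  next
    case False
    then have "G k a (s - k) < G j a (s - j)" using Suc by simp
    then show ?thesis using st by simp
  qed
qed

lemma loi_hi: "0 < a \<Longrightarrow> 0 < k \<Longrightarrow> 2 * k \<le> s \<Longrightarrow> G a k (s - k) \<le> G a (s - k) k"
proof (cases "2 * k = s")
  case True then have "s - k = k" by simp
  then show ?thesis by simp
next
  case False
  assume "0 < a" "0 < k" "2 * k \<le> s"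
  then have "k < s - k" using False by simp
  then show ?thesis using L1[of a k "s - k"] \<open>0 < a\<close> \<open>0 < k\<close> by simp
qed

lemma CH: "0 < a \<Longrightarrow> 0 < k \<Longrightarrow> k < k' \<Longrightarrow> 2 * k' \<le> s \<Longrightarrow> G a (s - k) k < G a k' (s - k')"
proof (induction k')
  case 0 then show ?case by simp
next
  case (Suc j)
  have st: "G a (s - j) j < G a (j + 1) (s - j - 1)" using L2[of j "s - j" a] Suc.prems by simp
  show ?case
  proof (cases "k = j")
    case True then show ?thesis using st by simp
  next
    case False
    then have "G a (s - k) k < G a j (s - j)" using Suc by simp
    also have "\<dots> \<le> G a (s - j) j" using loi_hi[of a j s] Suc.prems by simp
    finally show ?thesis using st by simp
  qed
qed

lemma pair_min: "(m::nat) + n = s \<Longrightarrow> k = min m n \<Longrightarrow> ((m = k \<and> n = s - k) \<or> (m = s - k \<and> n = k)) \<and> 2 * k \<le> s \<and> m * n = k * (s - k)"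
  by (cases "m \<le> n") (auto simp: min_def)


theorem proposition5:
  fixes m n m' n' a :: nat
  assumes "0 < m" "0 < n" "0 < m'" "0 < n'" "0 < a"
    and "m + n = m' + n'"
  shows "((m, n) \<noteq> (m', n') \<longrightarrow>
           (F [a, m, n] < F [a, m', n'] \<longleftrightarrow> (m * n < m' * n' \<or> (m * n = m' * n' \<and> m < n))))
       \<and> (F [m, a, n] < F [m', a, n'] \<longleftrightarrow> m * n < m' * n')"
proof -
  define s where "s = m + n"
  define k where "k = min m n"
  define k' where "k' = min m' n'"
  have P: "((m = k \<and> n = s - k) \<or> (m = s - k \<and> n = k)) \<and> 2 * k \<le> s \<and> m * n = k * (s - k)"
    using pair_min[of m n s k] s_def k_def by simp
  have P': "((m' = k' \<and> n' = s - k') \<or> (m' = s - k' \<and> n' = k')) \<and> 2 * k' \<le> s \<and> m' * n' = k' * (s - k')"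
    using pair_min[of m' n' s k'] s_def k'_def assms(6) by simp
  have kp: "0 < k" "0 < k'" using assms k_def k'_def by auto
  have prodlt: "m * n < m' * n' \<longleftrightarrow> k < k'"
    using prod_mono[of k k' s] prod_mono[of k' k s] P P' by (metis less_irrefl not_less_iff_gr_or_eq)
  have prodeq: "m * n = m' * n' \<longleftrightarrow> k = k'"
    using prod_mono[of k k' s] prod_mono[of k' k s] P P' by (metis less_irrefl not_less_iff_gr_or_eq)
  have part2: "F [m, a, n] < F [m', a, n'] \<longleftrightarrow> m * n < m' * n'"
  proof -
    have g1: "F [m, a, n] = G k a (s - k)"
      using FG[of m a n] assms P G_sym[of a k "s - k"] by auto
    have g2: "F [m', a, n'] = G k' a (s - k')"
      using FG[of m' a n'] assms P' G_sym[of a k' "s - k'"] by auto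
    have "G k a (s - k) < G k' a (s - k') \<longleftrightarrow> k < k'"
      using MONO2[of a k k' s] MONO2[of a k' k s] P P' assms(5)
      by (metis less_irrefl less_asym not_less_iff_gr_or_eq)
    then show ?thesis using g1 g2 prodlt by simp
  qed
  have part1: "(m, n) \<noteq> (m', n') \<Longrightarrow>
           (F [a, m, n] < F [a, m', n'] \<longleftrightarrow> (m * n < m' * n' \<or> (m * n = m' * n' \<and> m < n)))"
  proof -
    assume dist: "(m, n) \<noteq> (m', n')"
    have f1: "F [a, m, n] = G a m n" using FG assms by simp
    have f2: "F [a, m', n'] = G a m' n'" using FG assms by simp
    have up: "G a m n \<le> G a (s - k) k" using P loi_hi[of a k s] kp assms(5) by auto
    have up': "G a m' n' \<le> G a (s - k') k'" using P' loi_hi[of a k' s] kp assms(5) by auto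
    have lw: "G a k (s - k) \<le> G a m n" using P loi_hi[of a k s] kp assms(5) by auto
    have lw': "G a k' (s - k') \<le> G a m' n'" using P' loi_hi[of a k' s] kp assms(5) by auto
    consider "k < k'" | "k' < k" | "k = k'" by linarith
    then show ?thesis
    proof cases
      case 1
      have "G a m n < G a m' n'" using up CH[of a k k' s] kp assms(5) 1 P' lw' by linarith
      then show ?thesis using f1 f2 prodlt 1 by simp
    next
      case 2
      have "G a m' n' < G a m n" using up' CH[of a k' k s] kp assms(5) 2 P lw by linarith
      then show ?thesis using f1 f2 prodlt prodeq 2 by simp
    next
      case 3
      have ne: "k \<noteq> s - k" using dist P P' 3 by auto
      have kl: "k < s - k" using ne P by linarith
      show ?thesis
      proof (cases "m < n")
        case True
        then have "m = k" "n = s - k" "m' = s - k" "n' = k" using P P' 3 dist kl by auto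
        then show ?thesis using L1[of a k "s - k"] kp assms(5) kl f1 f2 prodeq 3 True by simp
      next
        case False
        then have "m = s - k" "n = k" "m' = k" "n' = s - k" using P P' 3 dist kl by auto
        then show ?thesis using L1[of a k "s - k"] kp assms(5) kl f1 f2 prodeq 3 False by simp
      qed
    qed
  qed
  show ?thesis using part1 part2 by blast
qed

end
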